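(* For any $n\ge 1$, the Hochschild lattice $(\mathsf{Tr}(n),\preccurlyeq)$ is constructible by interval doubling.
   Context: A triword of size $n$ is a word $u=u_1\cdots u_n$ with $u_i\in\{0,1,2\}$, $u_1\ne 2$, and such that $u_i=0$ implies $u_j\neq 1$ for all $j>i$; $\mathsf{Tr}(n)$ is their set, ordered componentwise ($u\preccurlyeq v$ iff $u_i\le v_i$ for all $i$). Let $\mathbf{2}=\{0<1\}$. For a poset $\mathcal{P}$ and an interval $I$ of $\mathcal{P}$, the interval doubling $\mathcal{P}[I]:=(\mathcal{P}\setminus I)\cup(I\times\mathbf{2})$ is ordered by: $x\preccurlyeq' y$ iff either $x,y\in\mathcal{P}\setminus I$ and $x\preccurlyeq y$; or $x\in\mathcal{P}\setminus I$, $y=(y',b)$ and $x\preccurlyeq y'$; or $x=(x',a)$, $y\in\mathcal{P}\setminus I$ and $x'\preccurlyeq y$; or $x=(x',a)$, $y=(y',b)$, $x'\preccurlyeq y'$ and $a\le b$. A lattice is constructible by interval doubling if it is isomorphic to a poset obtained from the one-element lattice by a finite sequence of interval doublings. *)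

theory Defs
  imports Main
begin

definition triwords :: "nat \<Rightarrow> nat list set" where
  "triwords n = {u. length u = n \<and> (\<forall>i<n. u ! i \<le> 2) \<and> (n > 0 \<longrightarrow> u ! 0 \<noteq> 2)
                   \<and> (\<forall>i j. i < j \<and> j < n \<and> u ! i = 0 \<longrightarrow> u ! j \<noteq> 1)}"

definition tr_le :: "nat list \<Rightarrow> nat list \<Rightarrow> bool" where
  "tr_le u v \<longleftrightarrow> length u = length v \<and> (\<forall>i<length u. u ! i \<le> v ! i)"

definition is_interval :: "'a set \<Rightarrow> ('a \<Rightarrow> 'a \<Rightarrow> bool) \<Rightarrow> 'a set \<Rightarrow> bool" where
  "is_interval P le I \<longleftrightarrow> (\<exists>a\<in>P. \<exists>b\<in>P. le a b \<and> I = {x\<in>P. le a x \<and> le x b})"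

text \<open>Interval doubling P[I] = (P - I) \<union> (I \<times> 2), with 2 = {False < True}.\<close>
definition dbl_carrier :: "'a set \<Rightarrow> 'a set \<Rightarrow> ('a + 'a \<times> bool) set" where
  "dbl_carrier P I = Inl ` (P - I) \<union> Inr ` (I \<times> UNIV)"

fun dbl_le :: "('a \<Rightarrow> 'a \<Rightarrow> bool) \<Rightarrow> ('a + 'a \<times> bool) \<Rightarrow> ('a + 'a \<times> bool) \<Rightarrow> bool" where
  "dbl_le le (Inl x) (Inl y) = le x y"
| "dbl_le le (Inl x) (Inr (y, b)) = le x y"
| "dbl_le le (Inr (x, a)) (Inl y) = le x y"
| "dbl_le le (Inr (x, a)) (Inr (y, b)) = (le x y \<and> (a \<longrightarrow> b))"

definition order_iso :: "'a set \<Rightarrow> ('a \<Rightarrow> 'a \<Rightarrow> bool) \<Rightarrow> 'b set \<Rightarrow> ('b \<Rightarrow> 'b \<Rightarrow> bool) \<Rightarrow> ('a \<Rightarrow> 'b) \<Rightarrow> bool" where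
  "order_iso A leA B leB f \<longleftrightarrow> bij_betw f A B \<and> (\<forall>x\<in>A. \<forall>y\<in>A. leA x y \<longleftrightarrow> leB (f x) (f y))"

inductive dbl_constr_nat :: "nat set \<Rightarrow> (nat \<Rightarrow> nat \<Rightarrow> bool) \<Rightarrow> bool" where
  base: "le x x \<Longrightarrow> dbl_constr_nat {x} le"
| step: "dbl_constr_nat P le \<Longrightarrow> is_interval P le I \<Longrightarrow>
         order_iso Q leQ (dbl_carrier P I) (dbl_le le) (f :: nat \<Rightarrow> nat + nat \<times> bool) \<Longrightarrow>
         dbl_constr_nat Q leQ"

definition constructible_by_doubling :: "'a set \<Rightarrow> ('a \<Rightarrow> 'a \<Rightarrow> bool) \<Rightarrow> bool" where
  "constructible_by_doubling A le \<longleftrightarrow>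
     (\<exists>B leB (f :: 'a \<Rightarrow> nat). dbl_constr_nat B leB \<and> order_iso A le B leB f)"

end

theory Submission
  imports Defs
begin

lemma order_iso_intro:
  assumes "\<And>x y. x\<in>A \<Longrightarrow> y\<in>A \<Longrightarrow> leA x y \<longleftrightarrow> leB (f x) (f y)"
    and "\<And>x. x\<in>A \<Longrightarrow> leA x x"
    and "\<And>x y. x\<in>A \<Longrightarrow> y\<in>A \<Longrightarrow> leA x y \<Longrightarrow> leA y x \<Longrightarrow> x = y"
    and "f ` A = B"
  shows "order_iso A leA B leB f"
proof -
  have "inj_on f A"
  proof (rule inj_onI)
    fix x y assume xy: "x\<in>A" "y\<in>A" "f x = f y"
    then have "leA x y" "leA y x" using assms(1,2) by metis+
    then show "x = y" using assms(3) xy by blast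
  qed
  then show ?thesis using assms(1,4) unfolding order_iso_def bij_betw_def by blast
qed

lemma order_iso_comp:
  assumes "order_iso A la B lb f" "order_iso B lb C lc g"
  shows "order_iso A la C lc (g \<circ> f)"
proof -
  have "bij_betw (g \<circ> f) A C" using assms bij_betw_trans unfolding order_iso_def by blast
  moreover have "\<forall>x\<in>A. \<forall>y\<in>A. la x y \<longleftrightarrow> lc ((g \<circ> f) x) ((g \<circ> f) y)"
    using assms unfolding order_iso_def bij_betw_def by auto
  ultimately show ?thesis unfolding order_iso_def by blast
qed

lemma constr_iso:
  assumes "constructible_by_doubling B lb" "order_iso A la B lb g"
  shows "constructible_by_doubling A la"
  using assms order_iso_comp unfolding constructible_by_doubling_def by blast

lemma constr_single: "le x x \<Longrightarrow> constructible_by_doubling {x} le"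
  unfolding constructible_by_doubling_def
  apply (rule exI[of _ "{0}"], rule exI[of _ "\<lambda>_ _. True"], rule exI[of _ "\<lambda>_. 0"])
  by (auto intro: dbl_constr_nat.base simp: order_iso_def bij_betw_def)

definition enc :: "nat + nat \<times> bool \<Rightarrow> nat" where
  "enc z = (case z of Inl x \<Rightarrow> 3*x | Inr (x,b) \<Rightarrow> 3*x + (if b then 2 else 1))"
definition dec :: "nat \<Rightarrow> nat + nat \<times> bool" where
  "dec n = (if n mod 3 = 0 then Inl (n div 3) else Inr (n div 3, n mod 3 = 2))"
lemma dec_enc: "dec (enc z) = z"
proof (cases z)
  case (Inl x) then show ?thesis by (simp add: enc_def dec_def)
next
  case (Inr p) then obtain x b where p: "z = Inr (x, b)" by (cases p) auto
  show ?thesis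
  proof (cases b)
    case True
    have "(3*x+2) mod 3 = (2::nat)" "(3*x+2) div 3 = x" by presburger+
    then show ?thesis using p True by (simp add: enc_def dec_def)
  next
    case False
    have "(3*x+1) mod 3 = (1::nat)" "(3*x+1) div 3 = x" by presburger+
    then show ?thesis using p False by (simp add: enc_def dec_def)
  qed
qed

lemma constr_double:
  assumes "constructible_by_doubling P le" "is_interval P le I"
  shows "constructible_by_doubling (dbl_carrier P I) (dbl_le le)"
proof -
  obtain B leB f where B: "dbl_constr_nat B leB" and f: "order_iso P le B leB f"
    using assms(1) unfolding constructible_by_doubling_def by blast
  from assms(2) obtain a b where ab: "a\<in>P" "b\<in>P" "le a b" "I = {x\<in>P. le a x \<and> le x b}"
    unfolding is_interval_def by blast
  define I' where "I' = f ` I"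
  have fb: "bij_betw f P B" and fle: "\<And>x y. x\<in>P \<Longrightarrow> y\<in>P \<Longrightarrow> le x y \<longleftrightarrow> leB (f x) (f y)"
    using f unfolding order_iso_def by auto
  have I'eq: "I' = {y\<in>B. leB (f a) y \<and> leB y (f b)}"
  proof
    show "I' \<subseteq> {y\<in>B. leB (f a) y \<and> leB y (f b)}" using ab fb fle unfolding I'_def bij_betw_def by auto
    show "{y\<in>B. leB (f a) y \<and> leB y (f b)} \<subseteq> I'"
    proof
      fix y assume y: "y \<in> {y\<in>B. leB (f a) y \<and> leB y (f b)}"
      then obtain x where "x\<in>P" "y = f x" using fb unfolding bij_betw_def by auto
      then show "y \<in> I'" using y ab fle unfolding I'_def by auto
    qed
  qed
  have I'int: "is_interval B leB I'"
    unfolding is_interval_def I'eq using ab fb fle unfolding bij_betw_def by blast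
  define F where "F = map_sum f (map_prod f (id::bool\<Rightarrow>bool))"
  have IP: "I \<subseteq> P" using ab by auto
  have injf: "inj_on f P" and imf: "f ` P = B" using fb unfolding bij_betw_def by auto
  have diff: "f ` (P - I) = B - I'" unfolding I'_def using injf imf IP
    by (simp add: inj_on_image_set_diff)
  have Fiso: "order_iso (dbl_carrier P I) (dbl_le le) (dbl_carrier B I') (dbl_le leB) F"
    unfolding order_iso_def bij_betw_def
  proof (intro conjI ballI)
    show "inj_on F (dbl_carrier P I)"
    proof (rule inj_onI)
      fix x y assume "x \<in> dbl_carrier P I" "y \<in> dbl_carrier P I" "F x = F y"
      moreover have key: "\<And>a b. a\<in>P \<Longrightarrow> b\<in>P \<Longrightarrow> f a = f b \<Longrightarrow> a = b"
        using injf by (meson inj_onD)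
      ultimately show "x = y" unfolding dbl_carrier_def F_def using IP
        by (cases x; cases y) (auto intro: key)
    qed
    have "F ` dbl_carrier P I = Inl ` (f ` (P - I)) \<union> Inr ` (f ` I \<times> (UNIV::bool set))"
    proof
      show "F ` dbl_carrier P I \<subseteq> Inl ` (f ` (P - I)) \<union> Inr ` (f ` I \<times> (UNIV::bool set))"
        unfolding dbl_carrier_def F_def by auto
      show "Inl ` (f ` (P - I)) \<union> Inr ` (f ` I \<times> (UNIV::bool set)) \<subseteq> F ` dbl_carrier P I"
      proof
        fix z assume "z \<in> Inl ` (f ` (P - I)) \<union> Inr ` (f ` I \<times> (UNIV::bool set))"
        then consider a where "a\<in>P-I" "z = Inl (f a)" | a c where "a\<in>I" "z = Inr (f a, c)" by auto
        then show "z \<in> F ` dbl_carrier P I"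
        proof cases
          case 1 then show ?thesis unfolding dbl_carrier_def F_def
            by (intro image_eqI[of _ _ "Inl a"]) auto
        next
          case 2 then show ?thesis unfolding dbl_carrier_def F_def
            by (intro image_eqI[of _ _ "Inr (a,c)"]) auto
        qed
      qed
    qed
    then show "F ` dbl_carrier P I = dbl_carrier B I'"
      unfolding dbl_carrier_def diff I'_def by simp
    fix x y assume "x \<in> dbl_carrier P I" "y \<in> dbl_carrier P I"
    then show "dbl_le le x y = dbl_le leB (F x) (F y)"
      using IP unfolding dbl_carrier_def F_def by (cases x; cases y) (auto simp: fle subset_iff)
  qed
  define C where "C = dbl_carrier B I'"
  define Q where "Q = enc ` C"
  define leQ where "leQ = (\<lambda>x y. dbl_le leB (dec x) (dec y))"
  have injenc: "inj enc" by (metis dec_enc injI)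
  have decQ: "order_iso Q leQ C (dbl_le leB) dec"
    unfolding order_iso_def bij_betw_def Q_def leQ_def
    by (auto simp: inj_on_def dec_enc image_image)
  have QQ: "dbl_constr_nat Q leQ"
    using dbl_constr_nat.step[OF B I'int decQ[unfolded C_def]] .
  have encQ: "order_iso C (dbl_le leB) Q leQ enc"
    unfolding order_iso_def bij_betw_def Q_def leQ_def
    using injenc by (auto simp: dec_enc inj_on_def)
  show ?thesis unfolding constructible_by_doubling_def
    using QQ order_iso_comp[OF Fiso encQ[unfolded C_def]] by blast
qed


lemma tr_le_refl: "tr_le u u" by (simp add: tr_le_def)

lemma tr_le_antisym: "tr_le u v \<Longrightarrow> tr_le v u \<Longrightarrow> u = v"
  unfolding tr_le_def by (metis le_antisym nth_equalityI)

lemma tr_le_snoc: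
  assumes "length v = length v'"
  shows "tr_le (v@[x]) (v'@[x']) \<longleftrightarrow> tr_le v v' \<and> x \<le> x'"
  using assms unfolding tr_le_def by (auto simp: nth_append less_Suc_eq)

lemma tr_le_nz: "tr_le v v' \<Longrightarrow> 0 \<notin> set v \<Longrightarrow> 0 \<notin> set v'"
  unfolding tr_le_def by (metis in_set_conv_nth le_zero_eq)

lemma triwords_len: "u \<in> triwords n \<Longrightarrow> length u = n"
  by (simp add: triwords_def)

lemma triwords_snoc:
  assumes "n \<ge> 1" "length v = n"
  shows "v@[x] \<in> triwords (Suc n) \<longleftrightarrow> v \<in> triwords n \<and> x \<le> 2 \<and> (x = 1 \<longrightarrow> 0 \<notin> set v)"
proof
  assume A: "v@[x] \<in> triwords (Suc n)"
  have a1: "\<forall>i<Suc n. (v@[x]) ! i \<le> 2" and a2: "(v@[x]) ! 0 \<noteq> 2"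
    and a3: "\<forall>i j. i < j \<and> j < Suc n \<and> (v@[x]) ! i = 0 \<longrightarrow> (v@[x]) ! j \<noteq> 1"
    using A unfolding triwords_def by auto
  have "v \<in> triwords n" unfolding triwords_def
  proof (intro CollectI conjI allI impI)
    show "length v = n" by fact
    fix i assume "i < n" then show "v ! i \<le> 2" using a1[rule_format, of i] assms by (simp add: nth_append)
  next
    assume "n > 0" then show "v ! 0 \<noteq> 2" using a2 assms by (simp add: nth_append)
  next
    fix i j assume "i < j \<and> j < n \<and> v ! i = 0"
    then show "v ! j \<noteq> 1" using a3[rule_format, of i j] assms by (simp add: nth_append)
  qed
  moreover have "x \<le> 2" using a1[rule_format, of n] assms(2)[symmetric] by simp
  moreover have "x = 1 \<longrightarrow> 0 \<notin> set v"
  proof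
    assume x1: "x = 1"
    show "0 \<notin> set v"
    proof
      assume "0 \<in> set v"
      then obtain i where "i < n" "v ! i = 0" using assms by (auto simp: in_set_conv_nth)
      then show False using a3[rule_format, of i n] assms x1 by (simp add: nth_append)
    qed
  qed
  ultimately show "v \<in> triwords n \<and> x \<le> 2 \<and> (x = 1 \<longrightarrow> 0 \<notin> set v)" by blast
next
  assume B: "v \<in> triwords n \<and> x \<le> 2 \<and> (x = 1 \<longrightarrow> 0 \<notin> set v)"
  have b1: "\<forall>i<n. v ! i \<le> 2" and b2: "v ! 0 \<noteq> 2"
    and b3: "\<forall>i j. i < j \<and> j < n \<and> v ! i = 0 \<longrightarrow> v ! j \<noteq> 1"
    using B assms unfolding triwords_def by auto
  show "v@[x] \<in> triwords (Suc n)" unfolding triwords_def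
  proof (intro CollectI conjI allI impI)
    show "length (v@[x]) = Suc n" using assms by simp
    fix i assume "i < Suc n" then show "(v@[x]) ! i \<le> 2" using b1 B assms
      by (auto simp: nth_append less_Suc_eq)
  next
    show "(v@[x]) ! 0 \<noteq> 2" using b2 assms by (simp add: nth_append)
  next
    fix i j assume ij: "i < j \<and> j < Suc n \<and> (v@[x]) ! i = 0"
    show "(v@[x]) ! j \<noteq> 1"
    proof (cases "j < n")
      case True
      have "i < n" using ij True by simp
      have "v ! i = 0" using ij assms \<open>i < n\<close> by (simp add: nth_append)
      then show ?thesis using b3 True ij \<open>i < n\<close> assms by (simp add: nth_append)
    next
      case False
      then have "j = n" using ij by simp
      moreover have "i < n" using ij \<open>j = n\<close> by simp
      moreover have "v ! i = 0" using ij assms \<open>i < n\<close> by (simp add: nth_append)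
      ultimately show ?thesis using B assms by (auto simp: nth_append in_set_conv_nth)
    qed
  qed
qed

lemma triwords_Suc_obtain:
  assumes "u \<in> triwords (Suc n)"
  obtains v x where "u = v@[x]" "length v = n"
  using assms triwords_len[OF assms] by (metis length_Suc_conv_rev)

lemma triwords_1: "triwords 1 = {[0], [1]}"
proof
  show "triwords 1 \<subseteq> {[0], [1]}"
  proof
    fix u assume u: "u \<in> triwords 1"
    then obtain a where "u = [a]" using triwords_len[OF u] by (metis length_0_conv length_Suc_conv One_nat_def)
    moreover have "a \<le> 2" "a \<noteq> 2" using u \<open>u = [a]\<close> unfolding triwords_def by auto
    ultimately show "u \<in> {[0], [1]}" by auto
  qed
  show "{[0], [1]} \<subseteq> triwords 1" unfolding triwords_def by auto
qed

lemma constr_base: "constructible_by_doubling (triwords 1) tr_le"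
proof -
  have c0: "constructible_by_doubling {[]} tr_le" by (rule constr_single) (simp add: tr_le_def)
  have "is_interval {[]} tr_le {[]}" unfolding is_interval_def by (auto simp: tr_le_def)
  then have c1: "constructible_by_doubling (dbl_carrier {[]} {[]}) (dbl_le tr_le)"
    using constr_double[OF c0] by blast
  have iso: "order_iso (triwords 1) tr_le (dbl_carrier {[]} {[]}) (dbl_le tr_le) (\<lambda>u. Inr ([], u ! 0 = 1))"
  proof (rule order_iso_intro)
    fix x y assume "x \<in> triwords 1" "y \<in> triwords 1"
    then show "tr_le x y = dbl_le tr_le (Inr ([], x ! 0 = 1)) (Inr ([], y ! 0 = 1))"
      unfolding triwords_1 by (auto simp: tr_le_def)
  next
    show "\<And>x. tr_le x x" by (rule tr_le_refl)
  next
    show "\<And>x y. tr_le x y \<Longrightarrow> tr_le y x \<Longrightarrow> x = y" by (rule tr_le_antisym)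
  next
    show "(\<lambda>u. Inr ([], u ! 0 = 1)) ` triwords 1 = dbl_carrier {[]} {[]}"
      unfolding triwords_1 dbl_carrier_def by (auto simp: image_iff)
  qed
  show ?thesis by (rule constr_iso[OF c1 iso])
qed

definition gmap :: "nat list \<Rightarrow> (nat list + nat list \<times> bool) + (nat list + nat list \<times> bool) \<times> bool" where
  "gmap u = (let v = butlast u; x = last u in
     if x = 2 then Inl (Inr (v, True))
     else if x = 1 then Inr (Inr (v, False), True)
     else if 0 \<in> set v then Inl (Inr (v, False))
     else Inr (Inr (v, False), False))"

lemma constr_step:
  assumes n: "n \<ge> 1" and c: "constructible_by_doubling (triwords n) tr_le"
  shows "constructible_by_doubling (triwords (Suc n)) tr_le"
proof -
  define T where "T = triwords n"
  define D1 where "D1 = dbl_carrier T T"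
  define J where "J = (Inr ` ({v\<in>T. 0 \<notin> set v} \<times> {False}) :: (nat list + nat list \<times> bool) set)"
  have D1eq: "D1 = Inr ` (T \<times> UNIV)" unfolding D1_def dbl_carrier_def by simp
  define top where "top = (1::nat) # replicate (n-1) 2"
  have lentop: "length top = n" using n unfolding top_def by simp
  have topT: "top \<in> T" unfolding T_def triwords_def top_def using n by (auto simp: nth_Cons split: nat.splits)
  have botT: "replicate n 0 \<in> T" unfolding T_def triwords_def by auto
  have onesT: "replicate n 1 \<in> T" unfolding T_def triwords_def by auto
  have letop: "tr_le v top" if "v \<in> T" for v
  proof -
    have v: "length v = n" "\<forall>i<n. v ! i \<le> 2" "v ! 0 \<noteq> 2" using that n unfolding T_def triwords_def by auto
    show ?thesis unfolding tr_le_def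
    proof (intro conjI allI impI)
      show "length v = length top" using v lentop by simp
      fix i assume "i < length v"
      then show "v ! i \<le> top ! i" using v unfolding top_def
        by (cases i) (auto simp: nth_Cons)
    qed
  qed
  have lebot: "tr_le (replicate n 0) v" if "v \<in> T" for v
    using that unfolding T_def triwords_def tr_le_def by auto
  have leones: "tr_le (replicate n 1) v \<longleftrightarrow> 0 \<notin> set v" if "v \<in> T" for v
  proof -
    have "length v = n" using that unfolding T_def triwords_def by auto
    then show ?thesis unfolding tr_le_def by (auto simp: in_set_conv_nth Suc_le_eq)
  qed
  have "is_interval T tr_le T"
    unfolding is_interval_def using botT topT lebot letop by blast
  then have c1: "constructible_by_doubling D1 (dbl_le tr_le)"
    unfolding D1_def using constr_double c T_def by blast
  have "J = {x\<in>D1. dbl_le tr_le (Inr (replicate n 1, False)) x \<and> dbl_le tr_le x (Inr (top, False))}"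
    unfolding J_def D1eq using letop leones by auto
  then have "is_interval D1 (dbl_le tr_le) J"
    unfolding is_interval_def D1eq using onesT topT letop by auto
  then have c2: "constructible_by_doubling (dbl_carrier D1 J) (dbl_le (dbl_le tr_le))"
    using constr_double c1 by blast
  have iso: "order_iso (triwords (Suc n)) tr_le (dbl_carrier D1 J) (dbl_le (dbl_le tr_le)) gmap"
  proof (rule order_iso_intro)
    fix u u' assume u: "u \<in> triwords (Suc n)" and u': "u' \<in> triwords (Suc n)"
    obtain v x where v: "u = v@[x]" "length v = n" using triwords_Suc_obtain[OF u] by blast
    obtain v' x' where v': "u' = v'@[x']" "length v' = n" using triwords_Suc_obtain[OF u'] by blast
    have A: "x \<le> 2" "x = 1 \<longrightarrow> 0 \<notin> set v" using u v triwords_snoc[OF n] by auto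
    have B: "x' \<le> 2" "x' = 1 \<longrightarrow> 0 \<notin> set v'" using u' v' triwords_snoc[OF n] by auto
    have le: "tr_le u u' \<longleftrightarrow> tr_le v v' \<and> x \<le> x'" using v v' tr_le_snoc by simp
    have x3: "x = 0 \<or> x = 1 \<or> x = 2" "x' = 0 \<or> x' = 1 \<or> x' = 2" using A B by auto
    show "tr_le u u' = dbl_le (dbl_le tr_le) (gmap u) (gmap u')"
      unfolding le using x3 A B tr_le_nz[of v v'] unfolding v v' gmap_def Let_def
      by auto
  next
    show "\<And>x. tr_le x x" by (rule tr_le_refl)
  next
    show "\<And>x y. tr_le x y \<Longrightarrow> tr_le y x \<Longrightarrow> x = y" by (rule tr_le_antisym)
  next
    show "gmap ` triwords (Suc n) = dbl_carrier D1 J"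
    proof
      show "gmap ` triwords (Suc n) \<subseteq> dbl_carrier D1 J"
      proof
        fix w assume "w \<in> gmap ` triwords (Suc n)"
        then obtain u where u: "u \<in> triwords (Suc n)" "w = gmap u" by blast
        obtain v x where v: "u = v@[x]" "length v = n" using triwords_Suc_obtain[OF u(1)] by blast
        have A: "v \<in> T" "x \<le> 2" "x = 1 \<longrightarrow> 0 \<notin> set v" using u v triwords_snoc[OF n] T_def by auto
        have x3: "x = 0 \<or> x = 1 \<or> x = 2" using A by auto
        show "w \<in> dbl_carrier D1 J"
          using x3 A unfolding u(2) v gmap_def Let_def dbl_carrier_def D1eq J_def by auto
      qed
      show "dbl_carrier D1 J \<subseteq> gmap ` triwords (Suc n)"
      proof
        fix w assume w: "w \<in> dbl_carrier D1 J"
        have mem: "v@[x] \<in> triwords (Suc n)" if "v \<in> T" "x \<le> 2" "x = 1 \<longrightarrow> 0 \<notin> set v" for v x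
          using that triwords_snoc[OF n] T_def triwords_len by auto
        have img: "gmap (v@[x]) \<in> gmap ` triwords (Suc n)" if "v \<in> T" "x \<le> 2" "x = 1 \<longrightarrow> 0 \<notin> set v" for v x
          using mem[OF that] by blast
        show "w \<in> gmap ` triwords (Suc n)"
        proof (cases w)
          case (Inl y)
          then obtain v c where y: "y = Inr (v, c)" "v \<in> T" "\<not> (c = False \<and> 0 \<notin> set v)"
            using w unfolding dbl_carrier_def D1eq J_def by auto
          show ?thesis
          proof (cases c)
            case True
            then show ?thesis using img[of v 2] y Inl by (simp add: gmap_def)
          next
            case False
            then show ?thesis using img[of v 0] y Inl by (simp add: gmap_def)
          qed
        next
          case (Inr z)
          then obtain v c where z: "z = (Inr (v, False), c)" "v \<in> T" "0 \<notin> set v"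
            using w unfolding dbl_carrier_def D1eq J_def by auto
          show ?thesis
          proof (cases c)
            case True
            then show ?thesis using img[of v 1] z Inr by (simp add: gmap_def)
          next
            case False
            then show ?thesis using img[of v 0] z Inr by (simp add: gmap_def)
          qed
        qed
      qed
    qed
  qed
  show ?thesis by (rule constr_iso[OF c2 iso])
qed

theorem theorem2p3:
  fixes n :: nat
  assumes "n \<ge> 1"
  shows "constructible_by_doubling (triwords n) tr_le"
  using assms
proof (induction n rule: dec_induct)
  case base then show ?case using constr_base by simp
next
  case (step m) then show ?case using constr_step by simp
qed

end
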